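(* Let $\eta,\lambda\in\mathbb{C}$ and let $v\in\mathcal{F}_{\eta,\lambda}$ be a singular vector that is not a multiple of $|\eta\rangle$. Define $\kappa(v)=\max\{k\in\mathbb{Z}:\alpha_kv\neq0\}$. Then: 1. $\kappa(v)>0$. 2. $\alpha_{\kappa(v)}v$ is again a (nonzero) singular vector. 3. If $v$ is homogeneous of grade $d$ and $\mathcal{F}_{\eta,\lambda}$ contains no proper singular vector of grade strictly between $0$ and $d$, then the coefficient of $\alpha_{-d}|\eta\rangle$ in the expansion of $v$ in the monomial basis is nonzero.
   Context: The Heisenberg modes satisfy $[\alpha_m,\alpha_n]=m\delta_{m,-n}$. $\mathcal{F}_{\eta,\lambda}$ is the Fock space generated by the vacuum $|\eta\rangle$ with $\alpha_n|\eta\rangle=0$ for $n>0$ and $\alpha_0|\eta\rangle=\eta|\eta\rangle$. It is graded by the monomial basis $\alpha_{-\sigma_1}\cdots\alpha_{-\sigma_j}|\eta\rangle$, which has grade $\sum_i\sigma_i$. $\mathcal{F}_{\eta,\lambda}$ is a Virasoro module via $$L_n=\tfrac12\sum_k:\alpha_k\alpha_{n-k}:-\lambda(n+1)\alpha_n,$$ where normal ordering places positive-index modes to the right. A singular vector is a nonzero $L_0$-eigenvector $v$ with $L_nv=0$ for all $n>0$. It is proper if it is not a multiple of $|\eta\rangle$. *)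

theory Defs
  imports Complex_Main "HOL-Library.Multiset" "HOL-Library.Groups_Big_Fun"
begin

text \<open>Model of the Fock space F_{eta,lambda}: a vector is a finitely supported
coefficient function on the monomial basis. The monomial
alpha_{-s1} ... alpha_{-sj} |eta> (all s_i >= 1) is indexed by the multiset {#s1,...,sj#};
the empty multiset indexes the vacuum |eta>.\<close>

type_synonym fvec = "nat multiset \<Rightarrow> complex"

definition fock :: "fvec \<Rightarrow> bool" where
  "fock v \<longleftrightarrow> finite {M. v M \<noteq> 0} \<and> (\<forall>M. v M \<noteq> 0 \<longrightarrow> 0 \<notin># M)"

definition vac :: fvec where
  "vac = (\<lambda>M. if M = {#} then 1 else 0)"

text \<open>Heisenberg modes: alpha_{-n} (n>0) creates, alpha_n (n>0) acts as n d/dx_n,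
alpha_0 acts as eta.\<close>
definition alpha :: "complex \<Rightarrow> int \<Rightarrow> fvec \<Rightarrow> fvec" where
  "alpha eta k v =
     (if k > 0 then (\<lambda>M. of_int k * of_nat (count M (nat k) + 1) * v (M + {#nat k#}))
      else if k = 0 then (\<lambda>M. eta * v M)
      else (\<lambda>M. if nat (- k) \<in># M then v (M - {#nat (- k)#}) else 0))"

definition nord :: "complex \<Rightarrow> int \<Rightarrow> int \<Rightarrow> fvec \<Rightarrow> fvec" where
  "nord eta a b v = alpha eta (min a b) (alpha eta (max a b) v)"

text \<open>Virasoro action L_n = 1/2 sum_k :alpha_k alpha_{n-k}: - lambda (n+1) alpha_n;
the sum is finite on Fock vectors (Sum_any sums over the finitely many nonzero terms).\<close>
definition Lvir :: "complex \<Rightarrow> complex \<Rightarrow> int \<Rightarrow> fvec \<Rightarrow> fvec" where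
  "Lvir eta lam n v = (\<lambda>M. (1/2) * Sum_any (\<lambda>k. nord eta k (n - k) v M)
                            - lam * of_int (n + 1) * alpha eta n v M)"

definition singular :: "complex \<Rightarrow> complex \<Rightarrow> fvec \<Rightarrow> bool" where
  "singular eta lam v \<longleftrightarrow> v \<noteq> (\<lambda>_. 0) \<and> (\<exists>h. Lvir eta lam 0 v = (\<lambda>M. h * v M))
     \<and> (\<forall>n::int. n > 0 \<longrightarrow> Lvir eta lam n v = (\<lambda>_. 0))"

definition proper :: "fvec \<Rightarrow> bool" where
  "proper v \<longleftrightarrow> \<not> (\<exists>c. v = (\<lambda>M. c * vac M))"

definition homogeneous :: "nat \<Rightarrow> fvec \<Rightarrow> bool" where
  "homogeneous d v \<longleftrightarrow> (\<forall>M. v M \<noteq> 0 \<longrightarrow> sum_mset M = d)"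

definition kappa :: "complex \<Rightarrow> fvec \<Rightarrow> int" where
  "kappa eta v = (GREATEST k. alpha eta k v \<noteq> (\<lambda>_. 0))"

end

theory Submission
  imports Defs
begin


lemma alpha_pos: "k > 0 \<Longrightarrow> alpha eta k v M = of_int k * of_nat (count M (nat k) + 1) * v (M + {#nat k#})"
  by (simp add: alpha_def)
lemma alpha_zero: "alpha eta 0 v M = eta * v M"
  by (simp add: alpha_def)
lemma alpha_neg: "k < 0 \<Longrightarrow> alpha eta k v M = (if nat (- k) \<in># M then v (M - {#nat (- k)#}) else 0)"
  by (simp add: alpha_def)

lemma alpha_0fun: "alpha eta k (\<lambda>_. 0) = (\<lambda>_. 0)"
  by (auto simp: alpha_def)

lemma comm_pp: assumes "a > 0" "b > 0"
  shows "alpha eta a (alpha eta b w) M = alpha eta b (alpha eta a w) M"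
proof -
  obtain i j where ij: "a = int i" "b = int j" "i > 0" "j > 0" using assms
    by (intro that[of "nat a" "nat b"]) auto
  have e: "M + {#j#} + {#i#} = M + {#i#} + {#j#}" by simp
  show ?thesis using ij
    by (cases "i = j") (simp_all add: alpha_pos e add_mset_commute algebra_simps)
qed

lemma comm_nn: assumes "a < 0" "b < 0"
  shows "alpha eta a (alpha eta b w) M = alpha eta b (alpha eta a w) M"
proof -
  obtain i j where ij: "a = - int i" "b = - int j" "i > 0" "j > 0" using assms
    by (intro that[of "nat (-a)" "nat (-b)"]) auto
  show ?thesis using ij
  proof (cases "i = j")
    case False
    have 1: "j \<in># M - {#i#} \<longleftrightarrow> j \<in># M" "i \<in># M - {#j#} \<longleftrightarrow> i \<in># M"
      using False by (simp_all add: in_diff_count)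
    have 2: "M - {#i#} - {#j#} = M - {#j#} - {#i#}" by (rule diff_right_commute)
    show ?thesis using ij by (simp add: alpha_neg 1 2 add_mset_commute)
  qed simp
qed

lemma comm_pn: assumes "a > 0" "b < 0"
  shows "alpha eta a (alpha eta b w) M = alpha eta b (alpha eta a w) M + (if a + b = 0 then of_int a * w M else 0)"
proof -
  obtain i j where ij: "a = int i" "b = - int j" "i > 0" "j > 0" using assms
    by (intro that[of "nat a" "nat (-b)"]) auto
  show ?thesis
  proof (cases "i = j")
    case True
    then show ?thesis using ij
      apply (auto simp: alpha_pos alpha_neg)
      apply (subgoal_tac "count M j \<ge> 1")
       apply (simp add: algebra_simps)
      apply simp
      done
  next
    case False
    have e: "j \<in># M \<Longrightarrow> M + {#i#} - {#j#} = M - {#j#} + {#i#}"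
      using False by (simp add: multiset_eq_iff) 
    have c: "count (M - {#j#}) i = count M i" using False by simp
    have d: "j \<in># M + {#i#} \<longleftrightarrow> j \<in># M" using False by simp
    show ?thesis using ij False
      by (simp add: alpha_pos alpha_neg e c d)
  qed
qed

lemma comm: "alpha eta a (alpha eta b w) M = alpha eta b (alpha eta a w) M + (if a + b = 0 then of_int a * w M else 0)"
proof -
  consider "a = 0" | "b = 0" | "a > 0" "b > 0" | "a < 0" "b < 0" | "a > 0" "b < 0" | "a < 0" "b > 0"
    by linarith
  then show ?thesis
  proof cases
    case 1 then show ?thesis by (simp add: alpha_zero alpha_def)
  next
    case 2 then show ?thesis by (simp add: alpha_zero alpha_def)
  next
    case 3 then show ?thesis by (simp add: comm_pp)
  next
    case 4 then show ?thesis by (simp add: comm_nn)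
  next
    case 5 then show ?thesis by (simp add: comm_pn)
  next
    case 6
    have "alpha eta b (alpha eta a w) M = alpha eta a (alpha eta b w) M + (if b + a = 0 then of_int b * w M else 0)"
      using 6 comm_pn by simp
    then show ?thesis
      by (cases "a + b = 0") (auto simp: algebra_simps add_eq_0_iff)
  qed
qed



definition bnd :: "int \<Rightarrow> fvec \<Rightarrow> bool" where
  "bnd B w \<longleftrightarrow> (\<forall>M. w M \<noteq> 0 \<longrightarrow> (\<forall>x\<in>#M. int x \<le> B))"

lemma bnd_alpha_big: assumes "bnd B w" "0 \<le> B" "j > B" shows "alpha eta j w = (\<lambda>_. 0)"
proof
  fix M
  have "nat j \<in># M + {#nat j#}" by simp
  moreover have "int (nat j) > B" using assms by simp
  ultimately have "w (M + {#nat j#}) = 0" using assms(1) unfolding bnd_def by force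
  then show "alpha eta j w M = 0" using assms by (simp add: alpha_pos)
qed

lemma bnd_mono: "bnd B w \<Longrightarrow> B \<le> C \<Longrightarrow> bnd C w"
  unfolding bnd_def by force

lemma bnd_alpha: assumes "bnd B w" "m > 0" shows "bnd B (alpha eta m w)"
  unfolding bnd_def
proof (intro allI impI ballI)
  fix M x assume "alpha eta m w M \<noteq> 0" "x \<in># M"
  then have "w (M + {#nat m#}) \<noteq> 0" "x \<in># M + {#nat m#}" using assms by (auto simp: alpha_pos)
  then show "int x \<le> B" using assms(1) unfolding bnd_def by blast
qed

lemma nord_zero: assumes "bnd B w" "0 \<le> B" "k \<notin> {n-B..B}"
  shows "nord eta k (n-k) w M = 0"
proof -
  have "max k (n-k) > B" using assms(3) by auto
  then show ?thesis using bnd_alpha_big[OF assms(1,2)] by (simp add: nord_def alpha_0fun)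
qed

lemma Lvir_sum: assumes "bnd B w" "0 \<le> B"
  shows "Lvir eta lam n w M = 1/2 * (\<Sum>k\<in>{n-B..B}. nord eta k (n-k) w M) - lam * of_int (n+1) * alpha eta n w M"
proof -
  have "Sum_any (\<lambda>k. nord eta k (n-k) w M) = (\<Sum>k\<in>{n-B..B}. nord eta k (n-k) w M)"
  proof (rule Sum_any.expand_superset)
    show "{k. nord eta k (n-k) w M \<noteq> 0} \<subseteq> {n-B..B}" using nord_zero[OF assms] by blast
  qed simp
  then show ?thesis by (simp add: Lvir_def)
qed

lemma alpha_lin: "alpha eta k (\<lambda>M. a * (\<Sum>j\<in>S. f j M) - b * g M) M
   = a * (\<Sum>j\<in>S. alpha eta k (f j) M) - b * alpha eta k g M"
  by (auto simp: alpha_def sum_distrib_left algebra_simps)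

lemma nord_comm: assumes "m > 0" "n \<ge> 0"
  shows "nord eta k (n-k) (alpha eta m w) M = alpha eta m (nord eta k (n-k) w) M
     + (if min k (n-k) = -m then - of_int m * alpha eta (n+m) w M else 0)"
proof -
  define lo where "lo = min k (n-k)"
  define hi where "hi = max k (n-k)"
  have lh: "lo + hi = n" "hi \<ge> 0" using assms unfolding lo_def hi_def by auto
  have 1: "alpha eta hi (alpha eta m w) = alpha eta m (alpha eta hi w)"
    using comm[of eta hi m w] lh assms by auto
  have "nord eta k (n-k) (alpha eta m w) M = alpha eta lo (alpha eta hi (alpha eta m w)) M"
    by (simp add: nord_def lo_def hi_def)
  also have "\<dots> = alpha eta lo (alpha eta m (alpha eta hi w)) M"
    using 1 by simp
  also have "\<dots> = alpha eta m (alpha eta lo (alpha eta hi w)) M + (if lo + m = 0 then of_int lo * alpha eta hi w M else 0)"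
    by (rule comm)
  also have "\<dots> = alpha eta m (nord eta k (n-k) w) M
     + (if min k (n-k) = -m then - of_int m * alpha eta (n+m) w M else 0)"
  proof (cases "lo = -m")
    case True
    then have "hi = n + m" using lh by simp
    then show ?thesis using True by (simp add: nord_def lo_def hi_def)
  next
    case False
    then show ?thesis by (simp add: nord_def lo_def[symmetric] hi_def[symmetric] algebra_simps)
  qed
  finally show ?thesis .
qed

lemma count2: fixes m n B :: int assumes "m > 0" "n \<ge> 0" "n + m \<le> B"
  shows "(\<Sum>k\<in>{n-B..B}. (if min k (n-k) = -m then c else 0)) = 2 * (c::complex)"
proof -
  have "{k\<in>{n-B..B}. min k (n-k) = -m} = {-m, n+m}"
  proof (rule set_eqI)
    fix x show "x \<in> {k\<in>{n-B..B}. min k (n-k) = -m} \<longleftrightarrow> x \<in> {-m, n+m}"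
    proof -
      have "(n-B \<le> x \<and> x \<le> B \<and> min x (n-x) = -m) \<longleftrightarrow> (x = -m \<or> x = n+m)"
        using assms by (auto simp: min_def)
      then show ?thesis by simp
    qed
  qed
  moreover have "card {-m, n+m} = 2" using assms by auto
  moreover have "(\<Sum>k\<in>{n-B..B}. (if min k (n-k) = -m then c else 0)) = (\<Sum>k\<in>{k\<in>{n-B..B}. min k (n-k) = -m}. c)"
    by (rule sum.inter_filter[symmetric]) simp
  ultimately show ?thesis by simp
qed

lemma Lvir_comm: assumes "m > 0" "n \<ge> 0" "bnd B w" "0 \<le> B" "n + m \<le> B"
  shows "Lvir eta lam n (alpha eta m w) M = alpha eta m (Lvir eta lam n w) M - of_int m * alpha eta (n+m) w M"
proof -
  have bw: "bnd B (alpha eta m w)" using bnd_alpha assms by blast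
  have L: "Lvir eta lam n w = (\<lambda>M. 1/2 * (\<Sum>k\<in>{n-B..B}. nord eta k (n-k) w M) - (lam * of_int (n+1)) * alpha eta n w M)"
    by (rule ext) (simp add: Lvir_sum[OF assms(3,4)] mult.assoc)
  have nm: "alpha eta n (alpha eta m w) M = alpha eta m (alpha eta n w) M"
    using comm[of eta n m w M] assms by simp
  have "Lvir eta lam n (alpha eta m w) M = 1/2 * (\<Sum>k\<in>{n-B..B}. alpha eta m (nord eta k (n-k) w) M
     + (if min k (n-k) = -m then - of_int m * alpha eta (n+m) w M else 0)) - lam * of_int (n+1) * alpha eta m (alpha eta n w) M"
    using Lvir_sum[OF bw assms(4)] nord_comm[OF assms(1,2)] nm by simp
  also have "\<dots> = 1/2 * (\<Sum>k\<in>{n-B..B}. alpha eta m (nord eta k (n-k) w) M) - lam * of_int (n+1) * alpha eta m (alpha eta n w) M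
     - of_int m * alpha eta (n+m) w M"
    by (simp add: sum.distrib count2[OF assms(1,2,5)] algebra_simps)
  also have "\<dots> = alpha eta m (Lvir eta lam n w) M - of_int m * alpha eta (n+m) w M"
  proof -
    have "alpha eta m (Lvir eta lam n w) M = 1/2 * (\<Sum>k\<in>{n-B..B}. alpha eta m (nord eta k (n-k) w) M) - (lam * of_int (n+1)) * alpha eta m (alpha eta n w) M"
      unfolding L by (rule alpha_lin)
    then show ?thesis by (simp add: mult.assoc)
  qed
  finally show ?thesis .
qed



lemma mem_le_sum: "x \<in># M \<Longrightarrow> x \<le> sum_mset (M::nat multiset)"
  by (auto dest!: multi_member_split)

lemma fock_bnd: assumes "fock v" obtains B where "bnd B v" "0 \<le> B"
proof -
  let ?S = "{M. v M \<noteq> 0}"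
  have fin: "finite ?S" using assms by (simp add: fock_def)
  define B where "B = int (\<Sum>M\<in>?S. sum_mset M)"
  have "bnd B v" unfolding bnd_def B_def
  proof (intro allI impI ballI)
    fix M x assume a: "v M \<noteq> 0" "x \<in># M"
    then have "x \<le> sum_mset M" by (intro mem_le_sum)
    also have "\<dots> \<le> (\<Sum>M\<in>?S. sum_mset M)" using fin a by (intro member_le_sum) auto
    finally show "int x \<le> int (\<Sum>M\<in>?S. sum_mset M)" by (simp only: of_nat_le_iff)
  qed
  moreover have "0 \<le> B" unfolding B_def by (rule of_nat_0_le_iff)
  ultimately show ?thesis by (rule that)
qed

lemma fock_alpha: assumes "fock v" "k > 0" shows "fock (alpha eta k v)"
proof -
  have "{M. alpha eta k v M \<noteq> 0} \<subseteq> (\<lambda>N. N - {#nat k#}) ` {M. v M \<noteq> 0}"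
  proof
    fix M assume "M \<in> {M. alpha eta k v M \<noteq> 0}"
    then have "v (M + {#nat k#}) \<noteq> 0" using assms by (auto simp: alpha_pos)
    then show "M \<in> (\<lambda>N. N - {#nat k#}) ` {M. v M \<noteq> 0}"
      by (intro image_eqI[of _ _ "M + {#nat k#}"]) simp_all
  qed
  moreover have "finite {M. v M \<noteq> 0}" using assms by (simp add: fock_def)
  ultimately have "finite {M. alpha eta k v M \<noteq> 0}" by (meson finite_subset finite_imageI)
  moreover have "0 \<notin># M" if "alpha eta k v M \<noteq> 0" for M
  proof -
    have "v (M + {#nat k#}) \<noteq> 0" using that assms by (auto simp: alpha_pos)
    then have "0 \<notin># M + {#nat k#}" using assms(1) unfolding fock_def by blast
    then show ?thesis by simp
  qed
  ultimately show ?thesis by (simp add: fock_def)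
qed

lemma alpha_ne: assumes "v M \<noteq> 0" "x \<in># M" "x > 0" shows "alpha eta (int x) v \<noteq> (\<lambda>_. 0)"
proof
  assume "alpha eta (int x) v = (\<lambda>_. 0)"
  then have "alpha eta (int x) v (M - {#x#}) = 0" by simp
  moreover have "M - {#x#} + {#x#} = M" using assms by simp
  moreover have "count M x > 0" using assms(2) by simp
  ultimately show False using assms by (auto simp: alpha_pos)
qed

lemma alpha_smul: "alpha eta k (\<lambda>M. c * f M) M = c * alpha eta k f M"
  by (auto simp: alpha_def algebra_simps)

lemma kappa_prop: assumes "fock v" "proper v"
  shows "kappa eta v > 0 \<and> alpha eta (kappa eta v) v \<noteq> (\<lambda>_. 0) \<and> (\<forall>j > kappa eta v. alpha eta j v = (\<lambda>_. 0))"
proof -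
  obtain B where B: "bnd B v" "0 \<le> B" using fock_bnd assms(1) by blast
  have "\<exists>M. v M \<noteq> 0 \<and> M \<noteq> {#}"
  proof (rule ccontr)
    assume "\<not> ?thesis"
    then have "\<forall>M. v M \<noteq> 0 \<longrightarrow> M = {#}" by blast
    then have "v = (\<lambda>M. v {#} * vac M)" unfolding vac_def by (intro ext) auto
    then show False using assms(2) unfolding proper_def by blast
  qed
  then obtain M where M: "v M \<noteq> 0" "M \<noteq> {#}" by blast
  obtain x where x: "x \<in># M" using M(2) by (meson multiset_nonemptyE)
  have "0 \<notin># M" using assms(1) M(1) unfolding fock_def by blast
  have x0: "x > 0"
  proof (rule ccontr)
    assume "\<not> x > 0"
    then have "x = 0" by simp
    then show False using x \<open>0 \<notin># M\<close> by simp
  qed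
  have xB: "int x \<le> B" using B M x unfolding bnd_def by blast
  define K where "K = {k \<in> {1..B}. alpha eta k v \<noteq> (\<lambda>_. 0)}"
  have xK: "int x \<in> K" unfolding K_def using x0 xB alpha_ne[of v M x eta, OF M(1) x x0] by auto
  have fK: "finite K" unfolding K_def by (rule finite_subset[of _ "{1..B}"]) auto
  have gr: "y \<le> Max K" if "alpha eta y v \<noteq> (\<lambda>_. 0)" for y
  proof (cases "y \<le> 0")
    case True
    have "int x \<le> Max K" using fK xK by simp
    then show ?thesis using True x0 by simp
  next
    case False
    have "y \<le> B"
    proof (rule ccontr)
      assume "\<not> y \<le> B"
      then have "alpha eta y v = (\<lambda>_. 0)" using bnd_alpha_big[OF B] by simp
      then show False using that by simp
    qed
    then have "y \<in> K" using False that unfolding K_def by auto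
    then show ?thesis using fK by simp
  qed
  have MK: "Max K \<in> K" using fK xK by (intro Max_in) auto
  have Kp: "k \<ge> 1 \<and> alpha eta k v \<noteq> (\<lambda>_. 0)" if "k \<in> K" for k
    using that unfolding K_def by simp
  have 1: "Max K > 0" "alpha eta (Max K) v \<noteq> (\<lambda>_. 0)" using Kp[OF MK] by auto
  have kap: "kappa eta v = Max K" unfolding kappa_def
    by (rule Greatest_equality[where P="\<lambda>k. alpha eta k v \<noteq> (\<lambda>_. 0)", OF 1(2)]) (rule gr)
  have 2: "\<forall>j > Max K. alpha eta j v = (\<lambda>_. 0)" using gr by (meson not_less)
  show ?thesis unfolding kap using 1 2 by blast
qed

theorem mainTheorem5:
  fixes eta lam :: complex and v :: fvec
  assumes "fock v" and "singular eta lam v" and "proper v"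
  shows "kappa eta v > 0
    \<and> singular eta lam (alpha eta (kappa eta v) v)
    \<and> (\<forall>d::nat. homogeneous d v \<longrightarrow>
          (\<forall>w. fock w \<and> singular eta lam w \<and> proper w \<longrightarrow>
               \<not> (\<exists>e::nat. 0 < e \<and> e < d \<and> homogeneous e w)) \<longrightarrow>
          v {#d#} \<noteq> 0)"
proof -
  define k where "k = kappa eta v"
  have kp: "k > 0" "alpha eta k v \<noteq> (\<lambda>_. 0)" "\<And>j. j > k \<Longrightarrow> alpha eta j v = (\<lambda>_. 0)"
    using kappa_prop[OF assms(1,3), of eta] unfolding k_def by auto
  obtain h where h: "Lvir eta lam 0 v = (\<lambda>M. h * v M)"
    using assms(2) unfolding singular_def by blast
  have zero: "\<And>n. n > 0 \<Longrightarrow> Lvir eta lam n v = (\<lambda>_. 0)"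
    using assms(2) unfolding singular_def by blast
  obtain B where B: "bnd B v" "0 \<le> B" using fock_bnd assms(1) by blast
  have comm': "Lvir eta lam n (alpha eta k v) M = alpha eta k (Lvir eta lam n v) M - of_int k * alpha eta (n+k) v M"
    if "n \<ge> 0" for n M
    using Lvir_comm[OF kp(1) that bnd_mono[OF B(1), of "max B (n+k)"]] B(2) by simp
  have sing: "singular eta lam (alpha eta k v)"
    unfolding singular_def
  proof (intro conjI exI allI impI)
    show "alpha eta k v \<noteq> (\<lambda>_. 0)" by (rule kp(2))
    show "Lvir eta lam 0 (alpha eta k v) = (\<lambda>M. (h - of_int k) * alpha eta k v M)"
    proof
      fix M show "Lvir eta lam 0 (alpha eta k v) M = (h - of_int k) * alpha eta k v M"
        using comm'[of 0 M] by (simp add: h alpha_smul algebra_simps)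
    qed
    fix n :: int assume n: "n > 0"
    show "Lvir eta lam n (alpha eta k v) = (\<lambda>_. 0)"
    proof
      fix M show "Lvir eta lam n (alpha eta k v) M = 0"
        using comm'[of n M] n kp(3)[of "n+k"] by (simp add: zero alpha_0fun)
    qed
  qed
  have part3: "v {#d#} \<noteq> 0" if hom: "homogeneous d v"
     and H: "\<forall>w. fock w \<and> singular eta lam w \<and> proper w \<longrightarrow>
               \<not> (\<exists>e::nat. 0 < e \<and> e < d \<and> homogeneous e w)" for d
  proof -
    define w where "w = alpha eta k v"
    have fw: "fock w" unfolding w_def using fock_alpha[OF assms(1) kp(1)] .
    have sw: "singular eta lam w" unfolding w_def by (rule sing)
    have wsum: "sum_mset M + nat k = d" if "w M \<noteq> 0" for M
    proof -
      have "v (M + {#nat k#}) \<noteq> 0" using that kp(1) by (auto simp: w_def alpha_pos)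
      then show ?thesis using hom unfolding homogeneous_def by force
    qed
    obtain M0 where M0: "w M0 \<noteq> 0" using kp(2) unfolding w_def by blast
    have le: "nat k \<le> d" using wsum[OF M0] by simp
    have homw: "homogeneous (d - nat k) w" unfolding homogeneous_def using wsum by force
    have e0: "d - nat k = 0"
    proof (rule ccontr)
      assume ne: "d - nat k \<noteq> 0"
      have pw: "proper w" unfolding proper_def
      proof
        assume "\<exists>c. w = (\<lambda>M. c * vac M)"
        then obtain c where "w = (\<lambda>M. c * vac M)" by blast
        then have "M0 = {#}" using M0 by (auto simp: vac_def split: if_splits)
        then show False using wsum[OF M0] ne by simp
      qed
      have "0 < d - nat k" "d - nat k < d" using ne kp(1) le by auto
      then show False using H[rule_format, of w] fw sw pw homw by blast
    qed
    have "sum_mset M0 = 0" using wsum[OF M0] e0 le by simp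
    moreover have "0 \<notin># M0" using fw M0 unfolding fock_def by blast
    ultimately have "M0 = {#}"
    proof -
      assume s0: "sum_mset M0 = 0" and n0: "0 \<notin># M0"
      show "M0 = {#}"
      proof (rule ccontr)
        assume "M0 \<noteq> {#}"
        then obtain x where x: "x \<in># M0" by (meson multiset_nonemptyE)
        then have "x \<le> sum_mset M0" by (rule mem_le_sum)
        then have "x = 0" using s0 by simp
        then show False using x n0 by simp
      qed
    qed
    then have "v {#nat k#} \<noteq> 0" using M0 kp(1) by (simp add: w_def alpha_pos)
    moreover have "nat k = d" using e0 le by simp
    ultimately show ?thesis by simp
  qed
  show ?thesis unfolding k_def[symmetric]
  proof (intro conjI allI impI)
    show "k > 0" by (rule kp(1))
    show "singular eta lam (alpha eta k v)" by (rule sing)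
    fix d :: nat assume "homogeneous d v" "\<forall>w. fock w \<and> singular eta lam w \<and> proper w \<longrightarrow>
               \<not> (\<exists>e::nat. 0 < e \<and> e < d \<and> homogeneous e w)"
    then show "v {#d#} \<noteq> 0" by (rule part3)
  qed
qed


end
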